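(* Let $M_0>0$, $\varphi\in\mathrm{Lip}_\alpha$, $\tau_0\in C_+(\Omega)$ with $\|\varphi\|_{\mathrm{Lip}_\alpha}+\|\tau_0\|_\infty\le M_0$, and let $r\in(0,+\infty)$. Then system (1.1) with initial distribution $(\varphi,\tau_0)$ admits at most one solution $(A,\tau)\in C((-\infty,r],C(\Omega))\times C([0,r],C(\Omega))$ on $[0,r]$.
   Context: $\Omega\subset\mathbb R^n$ compact, $C(\Omega)$ with sup norm, $C_+(\Omega)$ nonnegative functions, $\alpha\ge0$ fixed. Standing assumption: $F:C(\Omega)\times C(\Omega)\times C(\Omega^2)\to C(\Omega)$ is Lipschitz on bounded sets (for every $M>0$ there is $L(M)$ with $\|F(u,v,w)-F(\hat u,\hat v,\hat w)\|_\infty\le L(M)[\|u-\hat u\|_\infty+\|v-\hat v\|_\infty+\|w-\hat w\|_\infty]$ when all arguments have norm $\le M$); $f:C(\Omega)\to C(\Omega)$ is Lipschitz, $0<f(\phi)(x)\le M_f$ for a constant $M_f$, and non-increasing for the pointwise order. $\mathrm{Lip}_\alpha$: $\phi\in C((-\infty,0],C(\Omega))$ with $\theta\mapsto e^{-\alpha|\theta|}\phi(\theta)$ bounded and Lipschitz, norm = sup norm + Lipschitz seminorm of that map. A solution of (1.1) on $[0,r]$ with initial distribution $(\varphi,\tau_0)$: continuous $A:(-\infty,r]\to C(\Omega)$, $\tau:[0,r]\to C_+(\Omega)$ with $A=\varphi$ on $(-\infty,0]$, $A(t,x)=\varphi(0,x)+\int_0^tF(A(l,\cdot),\tau(l,\cdot),A(l-\tau(l)))(x)dl$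 for $t\in[0,r]$, where $A(l-\tau(l))\in C(\Omega^2)$ is $(x,y)\mapsto A(l-\tau(l,x),y)$, and $\int_{t-\tau(t,x)}^tf(A(s,\cdot))(x)ds=\int_{-\tau_0(x)}^0f(\varphi(s,\cdot))(x)ds$ for $t\in[0,r]$, $x\in\Omega$. *)

theory Defs
  imports "HOL-Analysis.Analysis"
begin

text \<open>Sup norm over a set S (0 for the empty set). Elements of C(S) are represented
  by functions that are continuous on S; only their values on S matter.\<close>
definition supn :: "'b set \<Rightarrow> ('b \<Rightarrow> real) \<Rightarrow> real" where
  "supn S u = Sup (insert 0 ((\<lambda>x. \<bar>u x\<bar>) ` S))"

definition CF :: "'b::topological_space set \<Rightarrow> ('b \<Rightarrow> real) set" where
  "CF S = {u. continuous_on S u}"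

definition cont_into :: "real set \<Rightarrow> 'b::topological_space set \<Rightarrow> (real \<Rightarrow> 'b \<Rightarrow> real) \<Rightarrow> bool" where
  "cont_into I S A \<longleftrightarrow> (\<forall>t\<in>I. continuous_on S (A t)) \<and>
     (\<forall>t\<in>I. \<forall>e>0. \<exists>d>0. \<forall>s\<in>I. \<bar>s - t\<bar> < d \<longrightarrow> supn S (\<lambda>x. A s x - A t x) < e)"

definition standing_F ::
  "'b::topological_space set \<Rightarrow> (('b \<Rightarrow> real) \<Rightarrow> ('b \<Rightarrow> real) \<Rightarrow> ('b \<times> 'b \<Rightarrow> real) \<Rightarrow> ('b \<Rightarrow> real)) \<Rightarrow> bool" where
  "standing_F \<Omega> F \<longleftrightarrow>
     (\<forall>u\<in>CF \<Omega>. \<forall>v\<in>CF \<Omega>. \<forall>w\<in>CF (\<Omega> \<times> \<Omega>). continuous_on \<Omega> (F u v w)) \<and>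
     (\<forall>M>0. \<exists>L. \<forall>u\<in>CF \<Omega>. \<forall>v\<in>CF \<Omega>. \<forall>w\<in>CF (\<Omega> \<times> \<Omega>).
        \<forall>u'\<in>CF \<Omega>. \<forall>v'\<in>CF \<Omega>. \<forall>w'\<in>CF (\<Omega> \<times> \<Omega>).
        supn \<Omega> u \<le> M \<longrightarrow> supn \<Omega> v \<le> M \<longrightarrow> supn (\<Omega> \<times> \<Omega>) w \<le> M \<longrightarrow>
        supn \<Omega> u' \<le> M \<longrightarrow> supn \<Omega> v' \<le> M \<longrightarrow> supn (\<Omega> \<times> \<Omega>) w' \<le> M \<longrightarrow>
        supn \<Omega> (\<lambda>x. F u v w x - F u' v' w' x)
          \<le> L * (supn \<Omega> (\<lambda>x. u x - u' x) + supn \<Omega> (\<lambda>x. v x - v' x)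
                 + supn (\<Omega> \<times> \<Omega>) (\<lambda>p. w p - w' p)))"

definition standing_f :: "'b::topological_space set \<Rightarrow> (('b \<Rightarrow> real) \<Rightarrow> ('b \<Rightarrow> real)) \<Rightarrow> bool" where
  "standing_f \<Omega> f \<longleftrightarrow>
     (\<forall>u\<in>CF \<Omega>. continuous_on \<Omega> (f u)) \<and>
     (\<exists>L. \<forall>u\<in>CF \<Omega>. \<forall>u'\<in>CF \<Omega>.
        supn \<Omega> (\<lambda>x. f u x - f u' x) \<le> L * supn \<Omega> (\<lambda>x. u x - u' x)) \<and>
     (\<exists>Mf. \<forall>u\<in>CF \<Omega>. \<forall>x\<in>\<Omega>. 0 < f u x \<and> f u x \<le> Mf) \<and>
     (\<forall>u\<in>CF \<Omega>. \<forall>v\<in>CF \<Omega>. (\<forall>x\<in>\<Omega>. u x \<le> v x) \<longrightarrow> (\<forall>x\<in>\<Omega>. f v x \<le> f u x))"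

definition in_Lip_alpha :: "real \<Rightarrow> 'b::topological_space set \<Rightarrow> (real \<Rightarrow> 'b \<Rightarrow> real) \<Rightarrow> bool" where
  "in_Lip_alpha \<alpha> \<Omega> \<phi> \<longleftrightarrow>
     (\<forall>\<theta>\<le>0. continuous_on \<Omega> (\<phi> \<theta>)) \<and>
     (\<exists>B. \<forall>\<theta>\<le>0. supn \<Omega> (\<lambda>x. exp (- \<alpha> * \<bar>\<theta>\<bar>) * \<phi> \<theta> x) \<le> B) \<and>
     (\<exists>K. \<forall>\<theta>\<le>0. \<forall>\<theta>'\<le>0.
        supn \<Omega> (\<lambda>x. exp (- \<alpha> * \<bar>\<theta>\<bar>) * \<phi> \<theta> x - exp (- \<alpha> * \<bar>\<theta>'\<bar>) * \<phi> \<theta>' x)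
          \<le> K * \<bar>\<theta> - \<theta>'\<bar>)"

definition Lip_alpha_norm :: "real \<Rightarrow> 'b set \<Rightarrow> (real \<Rightarrow> 'b \<Rightarrow> real) \<Rightarrow> real" where
  "Lip_alpha_norm \<alpha> \<Omega> \<phi> =
     (SUP \<theta>\<in>{..0}. supn \<Omega> (\<lambda>x. exp (- \<alpha> * \<bar>\<theta>\<bar>) * \<phi> \<theta> x)) +
     (SUP p\<in>{(\<theta>, \<theta>'). \<theta> \<le> 0 \<and> \<theta>' \<le> 0 \<and> \<theta> \<noteq> \<theta>'}.
        supn \<Omega> (\<lambda>x. exp (- \<alpha> * \<bar>fst p\<bar>) * \<phi> (fst p) x - exp (- \<alpha> * \<bar>snd p\<bar>) * \<phi> (snd p) x)
          / \<bar>fst p - snd p\<bar>)"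

definition is_solution ::
  "'b::topological_space set \<Rightarrow> (('b \<Rightarrow> real) \<Rightarrow> ('b \<Rightarrow> real) \<Rightarrow> ('b \<times> 'b \<Rightarrow> real) \<Rightarrow> ('b \<Rightarrow> real))
   \<Rightarrow> (('b \<Rightarrow> real) \<Rightarrow> ('b \<Rightarrow> real)) \<Rightarrow> (real \<Rightarrow> 'b \<Rightarrow> real) \<Rightarrow> ('b \<Rightarrow> real) \<Rightarrow> real
   \<Rightarrow> (real \<Rightarrow> 'b \<Rightarrow> real) \<Rightarrow> (real \<Rightarrow> 'b \<Rightarrow> real) \<Rightarrow> bool" where
  "is_solution \<Omega> F f \<phi> \<tau>0 r A \<tau> \<longleftrightarrow>
     cont_into {..r} \<Omega> A \<and> cont_into {0..r} \<Omega> \<tau> \<and>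
     (\<forall>t\<in>{0..r}. \<forall>x\<in>\<Omega>. 0 \<le> \<tau> t x) \<and>
     (\<forall>t\<le>0. \<forall>x\<in>\<Omega>. A t x = \<phi> t x) \<and>
     (\<forall>t\<in>{0..r}. \<forall>x\<in>\<Omega>.
        ((\<lambda>l. F (A l) (\<tau> l) (\<lambda>(z, y). A (l - \<tau> l z) y) x) has_integral (A t x - \<phi> 0 x)) {0..t}) \<and>
     (\<forall>t\<in>{0..r}. \<forall>x\<in>\<Omega>.
        integral {t - \<tau> t x..t} (\<lambda>s. f (A s) x) = integral {- \<tau>0 x..0} (\<lambda>s. f (\<phi> s) x))"

end

theory Submission
  imports Defs
begin

lemma supn_ge:
  assumes "\<forall>y\<in>S. \<bar>u y\<bar> \<le> c" "x \<in> S"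
  shows "\<bar>u x\<bar> \<le> supn S u"
proof -
  have "bdd_above (insert 0 ((\<lambda>x. \<bar>u x\<bar>) ` S))"
    using assms(1) by (intro bdd_aboveI[of _ "max 0 c"]) auto
  then show ?thesis unfolding supn_def
    by (rule cSup_upper[rotated]) (use assms(2) in auto)
qed

lemma supn_nonneg:
  assumes "\<forall>y\<in>S. \<bar>u y\<bar> \<le> c"
  shows "0 \<le> supn S u"
proof -
  have "bdd_above (insert 0 ((\<lambda>x. \<bar>u x\<bar>) ` S))"
    using assms(1) by (intro bdd_aboveI[of _ "max 0 c"]) auto
  then show ?thesis unfolding supn_def
    by (rule cSup_upper[rotated]) auto
qed

lemma supn_le:
  assumes "0 \<le> c" "\<forall>x\<in>S. \<bar>u x\<bar> \<le> c"
  shows "supn S u \<le> c"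
  unfolding supn_def using assms by (intro cSup_least) auto

lemma cont_bdd:
  fixes u :: "'a::topological_space \<Rightarrow> real"
  assumes "compact S" "continuous_on S u"
  shows "\<exists>c. \<forall>y\<in>S. \<bar>u y\<bar> \<le> c"
proof -
  have "compact (u ` S)" by (rule compact_continuous_image[OF assms(2,1)])
  then have "bounded (u ` S)" by (rule compact_imp_bounded)
  then obtain c where "\<forall>z\<in>u ` S. norm z \<le> c" unfolding bounded_iff by blast
  then have "\<forall>y\<in>S. \<bar>u y\<bar> \<le> c" by simp
  then show ?thesis by blast
qed

lemma supn_ge_cont:
  fixes u :: "'a::topological_space \<Rightarrow> real"
  assumes "compact S" "continuous_on S u" "x \<in> S"
  shows "\<bar>u x\<bar> \<le> supn S u"
proof -
  obtain c where "\<forall>y\<in>S. \<bar>u y\<bar> \<le> c" using cont_bdd[OF assms(1,2)] by blast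
  then show ?thesis using assms(3) by (rule supn_ge)
qed

lemma supn_nonneg_cont:
  fixes u :: "'a::topological_space \<Rightarrow> real"
  assumes "compact S" "continuous_on S u"
  shows "0 \<le> supn S u"
proof -
  obtain c where "\<forall>y\<in>S. \<bar>u y\<bar> \<le> c" using cont_bdd[OF assms(1,2)] by blast
  then show ?thesis by (rule supn_nonneg)
qed

lemma cont_into_D: "cont_into I \<Omega> A \<Longrightarrow> t \<in> I \<Longrightarrow> continuous_on \<Omega> (A t)"
  unfolding cont_into_def by blast

lemma joint_cont:
  fixes \<Omega> :: "'b::metric_space set"
  assumes "compact \<Omega>" "cont_into I \<Omega> A"
  shows "continuous_on (I \<times> \<Omega>) (\<lambda>p. A (fst p) (snd p))"
  unfolding continuous_on_iff
proof (intro ballI allI impI)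
  fix p :: "real \<times> 'b" and e :: real
  assume p: "p \<in> I \<times> \<Omega>" and e: "0 < e"
  obtain t x where ptx: "p = (t, x)" "t \<in> I" "x \<in> \<Omega>" using p by auto
  have e2: "e/2 > 0" using e by simp
  obtain d1 where d1: "d1 > 0" "\<forall>s\<in>I. \<bar>s - t\<bar> < d1 \<longrightarrow> supn \<Omega> (\<lambda>x. A s x - A t x) < e/2"
    using assms(2) ptx e2 unfolding cont_into_def by blast
  have ct: "continuous_on \<Omega> (A t)" using assms(2) ptx cont_into_D by blast
  obtain d2 where d2: "d2 > 0" "\<forall>y\<in>\<Omega>. dist y x < d2 \<longrightarrow> dist (A t y) (A t x) < e/2"
    using ct ptx e2 unfolding continuous_on_iff by blast
  show "\<exists>d>0. \<forall>q\<in>I \<times> \<Omega>. dist q p < d \<longrightarrow> dist (A (fst q) (snd q)) (A (fst p) (snd p)) < e"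
  proof (intro exI[of _ "min d1 d2"] conjI ballI impI)
    show "min d1 d2 > 0" using d1 d2 by simp
    fix q assume q: "q \<in> I \<times> \<Omega>" and dq: "dist q p < min d1 d2"
    obtain s y where qsy: "q = (s, y)" "s \<in> I" "y \<in> \<Omega>" using q by auto
    have "dist s t < d1" using dist_fst_le[of q p] dq qsy ptx by auto
    then have 1: "supn \<Omega> (\<lambda>x. A s x - A t x) < e/2" using d1 qsy by (auto simp: dist_real_def)
    have cs: "continuous_on \<Omega> (A s)" using assms(2) qsy cont_into_D by blast
    have "\<bar>A s y - A t y\<bar> \<le> supn \<Omega> (\<lambda>x. A s x - A t x)"
      using supn_ge_cont[OF assms(1) continuous_on_diff[OF cs ct] qsy(3)] by simp
    moreover have "dist y x < d2" using dist_snd_le[of q p] dq qsy ptx by auto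
    then have "\<bar>A t y - A t x\<bar> < e/2" using d2 qsy by (auto simp: dist_real_def)
    ultimately have "\<bar>A s y - A t x\<bar> < e"
    proof -
      have "\<bar>A s y - A t x\<bar> \<le> \<bar>A s y - A t y\<bar> + \<bar>A t y - A t x\<bar>"
        using abs_triangle_ineq[of "A s y - A t y" "A t y - A t x"] by simp
      then show ?thesis using 1 \<open>\<bar>A s y - A t y\<bar> \<le> _\<close> \<open>\<bar>A t y - A t x\<bar> < e/2\<close> by linarith
    qed
    then show "dist (A (fst q) (snd q)) (A (fst p) (snd p)) < e"
      using qsy ptx by (simp add: dist_real_def)
  qed
qed

lemma cont_into_bdd:
  fixes \<Omega> :: "'b::metric_space set"
  assumes "compact \<Omega>" "cont_into I \<Omega> A" "{c..d} \<subseteq> I"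
  shows "\<exists>B\<ge>0. \<forall>s\<in>{c..d}. \<forall>y\<in>\<Omega>. \<bar>A s y\<bar> \<le> B"
proof -
  have "continuous_on ({c..d} \<times> \<Omega>) (\<lambda>p. A (fst p) (snd p))"
    using joint_cont[OF assms(1,2)] by (rule continuous_on_subset) (use assms(3) in auto)
  from cont_bdd[OF compact_Times[OF compact_Icc assms(1)] this]
  obtain B where "\<forall>p\<in>{c..d} \<times> \<Omega>. \<bar>A (fst p) (snd p)\<bar> \<le> B" by blast
  then have "\<forall>s\<in>{c..d}. \<forall>y\<in>\<Omega>. \<bar>A s y\<bar> \<le> max 0 B"
  proof (intro ballI)
    fix s y assume "s \<in> {c..d}" "y \<in> \<Omega>"
    then have "(s, y) \<in> {c..d} \<times> \<Omega>" by simp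
    then have "\<bar>A s y\<bar> \<le> B" using \<open>\<forall>p\<in>_. _\<close> by fastforce
    then show "\<bar>A s y\<bar> \<le> max 0 B" by simp
  qed
  then show ?thesis by (intro exI[of _ "max 0 B"]) simp
qed

definition flip where
  "flip \<Omega> f Lf \<longleftrightarrow> (\<forall>u\<in>CF \<Omega>. \<forall>u'\<in>CF \<Omega>. \<forall>x\<in>\<Omega>.
           \<bar>f u x - f u' x\<bar> \<le> Lf * supn \<Omega> (\<lambda>x. u x - u' x))"

lemma f_lip_pt:
  fixes \<Omega> :: "'b::metric_space set"
  assumes "compact \<Omega>" "standing_f \<Omega> f"
  shows "\<exists>Lf\<ge>0. flip \<Omega> f Lf"
proof -
  have fc: "\<forall>u\<in>CF \<Omega>. continuous_on \<Omega> (f u)" using assms(2) unfolding standing_f_def by blast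
  obtain L where L: "\<forall>u\<in>CF \<Omega>. \<forall>u'\<in>CF \<Omega>.
        supn \<Omega> (\<lambda>x. f u x - f u' x) \<le> L * supn \<Omega> (\<lambda>x. u x - u' x)"
    using assms(2) unfolding standing_f_def by blast
  show ?thesis unfolding flip_def
  proof (intro exI[of _ "\<bar>L\<bar>"] conjI ballI)
    show "0 \<le> \<bar>L\<bar>" by simp
    fix u u' x assume u: "u \<in> CF \<Omega>" and u': "u' \<in> CF \<Omega>" and x: "x \<in> \<Omega>"
    have "\<bar>f u x - f u' x\<bar> \<le> supn \<Omega> (\<lambda>x. f u x - f u' x)"
      using supn_ge_cont[OF assms(1) continuous_on_diff[OF bspec[OF fc u] bspec[OF fc u']] x] by simp
    also have "\<dots> \<le> L * supn \<Omega> (\<lambda>x. u x - u' x)" using L u u' by blast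
    also have "\<dots> \<le> \<bar>L\<bar> * supn \<Omega> (\<lambda>x. u x - u' x)"
    proof (rule mult_right_mono)
      show "0 \<le> supn \<Omega> (\<lambda>x. u x - u' x)"
        using supn_nonneg_cont[OF assms(1) continuous_on_diff] u u' unfolding CF_def by auto
    qed simp
    finally show "\<bar>f u x - f u' x\<bar> \<le> \<bar>L\<bar> * supn \<Omega> (\<lambda>x. u x - u' x)" .
  qed
qed

lemma standing_F_cont:
  assumes "standing_F \<Omega> F" "u \<in> CF \<Omega>" "v \<in> CF \<Omega>" "w \<in> CF (\<Omega> \<times> \<Omega>)"
  shows "continuous_on \<Omega> (F u v w)"
  using assms(1)[unfolded standing_F_def, THEN conjunct1] assms(2-4) by blast

definition Flip where
  "Flip \<Omega> F M LF \<longleftrightarrow> (\<forall>u\<in>CF \<Omega>. \<forall>v\<in>CF \<Omega>. \<forall>w\<in>CF (\<Omega> \<times> \<Omega>).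
        \<forall>u'\<in>CF \<Omega>. \<forall>v'\<in>CF \<Omega>. \<forall>w'\<in>CF (\<Omega> \<times> \<Omega>).
        supn \<Omega> u \<le> M \<longrightarrow> supn \<Omega> v \<le> M \<longrightarrow> supn (\<Omega> \<times> \<Omega>) w \<le> M \<longrightarrow>
        supn \<Omega> u' \<le> M \<longrightarrow> supn \<Omega> v' \<le> M \<longrightarrow> supn (\<Omega> \<times> \<Omega>) w' \<le> M \<longrightarrow>
        (\<forall>x\<in>\<Omega>. \<bar>F u v w x - F u' v' w' x\<bar>
          \<le> LF * (supn \<Omega> (\<lambda>x. u x - u' x) + supn \<Omega> (\<lambda>x. v x - v' x)
                 + supn (\<Omega> \<times> \<Omega>) (\<lambda>p. w p - w' p))))"

lemma F_lip_pt:
  fixes \<Omega> :: "'b::metric_space set"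
  assumes "compact \<Omega>" "standing_F \<Omega> F" "M > 0"
  shows "\<exists>LF\<ge>0. Flip \<Omega> F M LF"
proof -
  have Fc: "\<forall>u\<in>CF \<Omega>. \<forall>v\<in>CF \<Omega>. \<forall>w\<in>CF (\<Omega> \<times> \<Omega>). continuous_on \<Omega> (F u v w)"
    using assms(2) unfolding standing_F_def by blast
  obtain L where L: "\<forall>u\<in>CF \<Omega>. \<forall>v\<in>CF \<Omega>. \<forall>w\<in>CF (\<Omega> \<times> \<Omega>).
        \<forall>u'\<in>CF \<Omega>. \<forall>v'\<in>CF \<Omega>. \<forall>w'\<in>CF (\<Omega> \<times> \<Omega>).
        supn \<Omega> u \<le> M \<longrightarrow> supn \<Omega> v \<le> M \<longrightarrow> supn (\<Omega> \<times> \<Omega>) w \<le> M \<longrightarrow>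
        supn \<Omega> u' \<le> M \<longrightarrow> supn \<Omega> v' \<le> M \<longrightarrow> supn (\<Omega> \<times> \<Omega>) w' \<le> M \<longrightarrow>
        supn \<Omega> (\<lambda>x. F u v w x - F u' v' w' x)
          \<le> L * (supn \<Omega> (\<lambda>x. u x - u' x) + supn \<Omega> (\<lambda>x. v x - v' x)
                 + supn (\<Omega> \<times> \<Omega>) (\<lambda>p. w p - w' p))"
    using assms(2,3) unfolding standing_F_def by blast
  show ?thesis unfolding Flip_def
  proof (intro exI[of _ "\<bar>L\<bar>"] conjI ballI impI)
    show "0 \<le> \<bar>L\<bar>" by simp
    fix u v w u' v' w' x
    assume u: "u \<in> CF \<Omega>" and v: "v \<in> CF \<Omega>" and w: "w \<in> CF (\<Omega> \<times> \<Omega>)"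
      and u': "u' \<in> CF \<Omega>" and v': "v' \<in> CF \<Omega>" and w': "w' \<in> CF (\<Omega> \<times> \<Omega>)"
      and b: "supn \<Omega> u \<le> M" "supn \<Omega> v \<le> M" "supn (\<Omega> \<times> \<Omega>) w \<le> M"
        "supn \<Omega> u' \<le> M" "supn \<Omega> v' \<le> M" "supn (\<Omega> \<times> \<Omega>) w' \<le> M" and x: "x \<in> \<Omega>"
    have c1: "continuous_on \<Omega> (F u v w)" using Fc u v w by blast
    have c2: "continuous_on \<Omega> (F u' v' w')" using Fc u' v' w' by blast
    have "\<bar>F u v w x - F u' v' w' x\<bar> \<le> supn \<Omega> (\<lambda>x. F u v w x - F u' v' w' x)"
      using supn_ge_cont[OF assms(1) continuous_on_diff[OF c1 c2] x] by simp
    also have "\<dots> \<le> L * (supn \<Omega> (\<lambda>x. u x - u' x) + supn \<Omega> (\<lambda>x. v x - v' x)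
                 + supn (\<Omega> \<times> \<Omega>) (\<lambda>p. w p - w' p))"
      using L u v w u' v' w' b by blast
    also have "\<dots> \<le> \<bar>L\<bar> * (supn \<Omega> (\<lambda>x. u x - u' x) + supn \<Omega> (\<lambda>x. v x - v' x)
                 + supn (\<Omega> \<times> \<Omega>) (\<lambda>p. w p - w' p))"
    proof (rule mult_right_mono)
      have "0 \<le> supn \<Omega> (\<lambda>x. u x - u' x)"
        using supn_nonneg_cont[OF assms(1) continuous_on_diff] u u' unfolding CF_def by auto
      moreover have "0 \<le> supn \<Omega> (\<lambda>x. v x - v' x)"
        using supn_nonneg_cont[OF assms(1) continuous_on_diff] v v' unfolding CF_def by auto
      moreover have "0 \<le> supn (\<Omega> \<times> \<Omega>) (\<lambda>p. w p - w' p)"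
        using supn_nonneg_cont[OF compact_Times[OF assms(1) assms(1)] continuous_on_diff] w w'
        unfolding CF_def by auto
      ultimately show "0 \<le> supn \<Omega> (\<lambda>x. u x - u' x) + supn \<Omega> (\<lambda>x. v x - v' x)
                 + supn (\<Omega> \<times> \<Omega>) (\<lambda>p. w p - w' p)" by simp
    qed simp
    finally show "\<bar>F u v w x - F u' v' w' x\<bar> \<le> \<bar>L\<bar> * (supn \<Omega> (\<lambda>x. u x - u' x) + supn \<Omega> (\<lambda>x. v x - v' x)
                 + supn (\<Omega> \<times> \<Omega>) (\<lambda>p. w p - w' p))" .
  qed
qed

lemma cont_f_along:
  fixes \<Omega> :: "'b::metric_space set"
  assumes "compact \<Omega>" "cont_into I \<Omega> A" "Lf \<ge> 0"
    and Lf: "flip \<Omega> f Lf"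
    and "z \<in> \<Omega>"
  shows "continuous_on I (\<lambda>s. f (A s) z)"
  unfolding continuous_on_iff
proof (intro ballI allI impI)
  fix t e :: real assume t: "t \<in> I" and e: "0 < e"
  have e': "e / (Lf + 1) > 0" using e assms(3) by simp
  obtain d where d: "d > 0" "\<forall>s\<in>I. \<bar>s - t\<bar> < d \<longrightarrow> supn \<Omega> (\<lambda>x. A s x - A t x) < e / (Lf + 1)"
    using assms(2) t e' unfolding cont_into_def by blast
  show "\<exists>d>0. \<forall>s\<in>I. dist s t < d \<longrightarrow> dist (f (A s) z) (f (A t) z) < e"
  proof (intro exI[of _ d] conjI ballI impI)
    show "d > 0" by (rule d(1))
    fix s assume s: "s \<in> I" and ds: "dist s t < d"
    have As: "A s \<in> CF \<Omega>" and At: "A t \<in> CF \<Omega>"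
      using cont_into_D[OF assms(2)] s t unfolding CF_def by auto
    have "\<bar>f (A s) z - f (A t) z\<bar> \<le> Lf * supn \<Omega> (\<lambda>x. A s x - A t x)"
      using Lf[unfolded flip_def] As At assms(5) by blast
    also have "\<dots> \<le> Lf * (e / (Lf + 1))"
      using d(2) s ds assms(3) by (intro mult_left_mono) (auto simp: dist_real_def)
    also have "\<dots> < e" using e assms(3) by (simp add: field_simps)
    finally show "dist (f (A s) z) (f (A t) z) < e" by (simp add: dist_real_def)
  qed
qed

lemma W_cont:
  fixes \<Omega> :: "'b::metric_space set"
  assumes "compact \<Omega>" "cont_into {..r} \<Omega> A" "cont_into {0..r} \<Omega> \<tau>"
    and "\<forall>t\<in>{0..r}. \<forall>x\<in>\<Omega>. 0 \<le> \<tau> t x" and l: "l \<in> {0..r}"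
  shows "(\<lambda>(z, y). A (l - \<tau> l z) y) \<in> CF (\<Omega> \<times> \<Omega>)"
proof -
  have eq: "(\<lambda>(z, y). A (l - \<tau> l z) y) = (\<lambda>p. A (fst p) (snd p)) \<circ> (\<lambda>p. (l - \<tau> l (fst p), snd p))"
    by (auto simp: fun_eq_iff)
  have ct: "continuous_on \<Omega> (\<tau> l)" using cont_into_D[OF assms(3) l] .
  have c1: "continuous_on (\<Omega> \<times> \<Omega>) (\<lambda>p. (l - \<tau> l (fst p), snd p))"
    by (intro continuous_on_Pair continuous_on_diff continuous_on_const continuous_on_snd
        continuous_on_compose2[OF ct continuous_on_fst]) auto
  have img: "(\<lambda>p. (l - \<tau> l (fst p), snd p)) ` (\<Omega> \<times> \<Omega>) \<subseteq> {..r} \<times> \<Omega>"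
    using assms(4) l by force
  have "continuous_on (\<Omega> \<times> \<Omega>) ((\<lambda>p. A (fst p) (snd p)) \<circ> (\<lambda>p. (l - \<tau> l (fst p), snd p)))"
    by (rule continuous_on_compose[OF c1 continuous_on_subset[OF joint_cont[OF assms(1,2)] img]])
  then show ?thesis unfolding CF_def eq by simp
qed

lemma exp_lip1:
  fixes u v c :: real
  assumes "v \<le> u" "u \<le> c"
  shows "\<bar>exp u - exp v\<bar> \<le> exp c * \<bar>u - v\<bar>"
proof -
  have "exp v = exp u * exp (v - u)" by (simp add: exp_add[symmetric])
  moreover have "1 + (v - u) \<le> exp (v - u)" by (rule exp_ge_add_one_self)
  ultimately have "exp u - exp v = exp u * (1 - exp (v - u))" "1 - exp (v - u) \<le> u - v"
    by (simp_all add: algebra_simps)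
  then have "exp u - exp v \<le> exp u * (u - v)"
    by (metis exp_ge_zero mult_left_mono)
  also have "\<dots> \<le> exp c * (u - v)" using assms by (intro mult_right_mono) auto
  finally show ?thesis using assms by (simp add: abs_of_nonneg)
qed

lemma exp_lip:
  fixes u v c :: real
  assumes "v \<le> c" "u \<le> c"
  shows "\<bar>exp u - exp v\<bar> \<le> exp c * \<bar>u - v\<bar>"
proof (cases "v \<le> u")
  case True then show ?thesis using exp_lip1 assms by blast
next
  case False
  then have "\<bar>exp v - exp u\<bar> \<le> exp c * \<bar>v - u\<bar>" using exp_lip1[of u v c] assms by simp
  then show ?thesis by (simp add: abs_minus_commute)
qed

lemma int_abs_bound:
  fixes g :: "real \<Rightarrow> real"
  assumes "g integrable_on {a..b}" "a \<le> b" "\<forall>t\<in>{a..b}. \<bar>g t\<bar> \<le> B"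
  shows "\<bar>integral {a..b} g\<bar> \<le> B * (b - a)"
proof -
  have "norm (integral {a..b} g) \<le> integral {a..b} (\<lambda>_. B)"
    by (rule integral_norm_bound_integral) (use assms in auto)
  then show ?thesis using assms(2) by (simp add: mult.commute)
qed

lemma int_lower_bound:
  fixes g :: "real \<Rightarrow> real"
  assumes "g integrable_on {a..b}" "a \<le> b" "\<forall>t\<in>{a..b}. m \<le> g t"
  shows "m * (b - a) \<le> integral {a..b} g"
proof -
  have "integral {a..b} (\<lambda>_. m) \<le> integral {a..b} g"
    by (rule integral_le) (use assms in auto)
  then show ?thesis using assms(2) by (simp add: mult.commute)
qed

lemma phi_lip:
  fixes \<Omega> :: "'b::metric_space set"
  assumes "compact \<Omega>" "\<alpha> \<ge> 0" "in_Lip_alpha \<alpha> \<Omega> \<phi>" "R \<ge> 0"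
  shows "\<exists>K\<ge>0. \<forall>\<theta>\<in>{-R..0}. \<forall>\<theta>'\<in>{-R..0}. \<forall>y\<in>\<Omega>. \<bar>\<phi> \<theta> y - \<phi> \<theta>' y\<bar> \<le> K * \<bar>\<theta> - \<theta>'\<bar>"
proof -
  have pc: "\<forall>\<theta>\<le>0. continuous_on \<Omega> (\<phi> \<theta>)" using assms(3) unfolding in_Lip_alpha_def by blast
  obtain B where B: "\<forall>\<theta>\<le>0. supn \<Omega> (\<lambda>x. exp (- \<alpha> * \<bar>\<theta>\<bar>) * \<phi> \<theta> x) \<le> B"
    using assms(3) unfolding in_Lip_alpha_def by blast
  obtain K where K: "\<forall>\<theta>\<le>0. \<forall>\<theta>'\<le>0.
        supn \<Omega> (\<lambda>x. exp (- \<alpha> * \<bar>\<theta>\<bar>) * \<phi> \<theta> x - exp (- \<alpha> * \<bar>\<theta>'\<bar>) * \<phi> \<theta>' x)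
          \<le> K * \<bar>\<theta> - \<theta>'\<bar>"
    using assms(3) unfolding in_Lip_alpha_def by blast
  define C where "C = exp (\<alpha> * R)"
  have C0: "0 \<le> C" unfolding C_def by simp
  show ?thesis
  proof (intro exI[of _ "C * (\<bar>K\<bar> + \<alpha> * \<bar>B\<bar>)"] conjI ballI)
    show "0 \<le> C * (\<bar>K\<bar> + \<alpha> * \<bar>B\<bar>)" using C0 assms(2) by simp
    fix \<theta> \<theta>' y assume th: "\<theta> \<in> {-R..0}" and th': "\<theta>' \<in> {-R..0}" and y: "y \<in> \<Omega>"
    define P where "P = exp (- \<alpha> * \<bar>\<theta>\<bar>) * \<phi> \<theta> y"
    define P' where "P' = exp (- \<alpha> * \<bar>\<theta>'\<bar>) * \<phi> \<theta>' y"
    define E where "E = exp (\<alpha> * \<bar>\<theta>\<bar>)"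
    define E' where "E' = exp (\<alpha> * \<bar>\<theta>'\<bar>)"
    define D where "D = \<bar>\<theta> - \<theta>'\<bar>"
    have c1: "continuous_on \<Omega> (\<lambda>x. exp (- \<alpha> * \<bar>\<theta>\<bar>) * \<phi> \<theta> x)"
      using pc th by (intro continuous_on_mult continuous_on_const) auto
    have c2: "continuous_on \<Omega> (\<lambda>x. exp (- \<alpha> * \<bar>\<theta>'\<bar>) * \<phi> \<theta>' x)"
      using pc th' by (intro continuous_on_mult continuous_on_const) auto
    have "\<bar>P'\<bar> \<le> supn \<Omega> (\<lambda>x. exp (- \<alpha> * \<bar>\<theta>'\<bar>) * \<phi> \<theta>' x)"
      using supn_ge_cont[OF assms(1) c2 y] unfolding P'_def by simp
    moreover have "supn \<Omega> (\<lambda>x. exp (- \<alpha> * \<bar>\<theta>'\<bar>) * \<phi> \<theta>' x) \<le> B"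
      using B th' by simp
    ultimately have hP': "\<bar>P'\<bar> \<le> B" by linarith
    have "\<bar>P - P'\<bar> \<le> supn \<Omega> (\<lambda>x. exp (- \<alpha> * \<bar>\<theta>\<bar>) * \<phi> \<theta> x - exp (- \<alpha> * \<bar>\<theta>'\<bar>) * \<phi> \<theta>' x)"
      using supn_ge_cont[OF assms(1) continuous_on_diff[OF c1 c2] y]
      unfolding P_def P'_def by simp
    moreover have "supn \<Omega> (\<lambda>x. exp (- \<alpha> * \<bar>\<theta>\<bar>) * \<phi> \<theta> x - exp (- \<alpha> * \<bar>\<theta>'\<bar>) * \<phi> \<theta>' x) \<le> K * D"
      using K th th' unfolding D_def by simp
    ultimately have hd: "\<bar>P - P'\<bar> \<le> K * D" by linarith
    have phi1: "\<phi> \<theta> y = E * P" unfolding E_def P_def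
      by (simp add: mult.assoc[symmetric] exp_add[symmetric])
    have phi2: "\<phi> \<theta>' y = E' * P'" unfolding E'_def P'_def
      by (simp add: mult.assoc[symmetric] exp_add[symmetric])
    have "\<bar>\<theta>\<bar> \<le> R" using th by auto
    then have "\<alpha> * \<bar>\<theta>\<bar> \<le> \<alpha> * R" using assms(2) by (rule mult_left_mono)
    then have EC: "E \<le> C" unfolding E_def C_def by simp
    have E0: "0 \<le> E" unfolding E_def by simp
    have EE: "\<bar>E - E'\<bar> \<le> C * \<bar>\<alpha> * \<bar>\<theta>\<bar> - \<alpha> * \<bar>\<theta>'\<bar>\<bar>"
      unfolding E_def E'_def C_def
    proof (rule exp_lip)
      have "\<bar>\<theta>'\<bar> \<le> R" using th' by auto
      then show "\<alpha> * \<bar>\<theta>'\<bar> \<le> \<alpha> * R" using assms(2) by (rule mult_left_mono)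
      show "\<alpha> * \<bar>\<theta>\<bar> \<le> \<alpha> * R" by fact
    qed
    have "\<bar>\<alpha> * \<bar>\<theta>\<bar> - \<alpha> * \<bar>\<theta>'\<bar>\<bar> = \<alpha> * \<bar>\<bar>\<theta>\<bar> - \<bar>\<theta>'\<bar>\<bar>"
      using assms(2) by (simp add: abs_mult right_diff_distrib[symmetric])
    also have "\<dots> \<le> \<alpha> * D" unfolding D_def using assms(2)
      by (intro mult_left_mono) (auto simp: abs_triangle_ineq3)
    finally have EE2: "\<bar>E - E'\<bar> \<le> C * (\<alpha> * D)" using EE C0
      by (meson mult_left_mono order_trans)
    have "\<phi> \<theta> y - \<phi> \<theta>' y = E * (P - P') + (E - E') * P'"
      unfolding phi1 phi2 by (simp add: algebra_simps)
    then have "\<bar>\<phi> \<theta> y - \<phi> \<theta>' y\<bar> \<le> E * \<bar>P - P'\<bar> + \<bar>E - E'\<bar> * \<bar>P'\<bar>"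
    proof -
      have "\<bar>E * (P - P') + (E - E') * P'\<bar> \<le> \<bar>E * (P - P')\<bar> + \<bar>(E - E') * P'\<bar>"
        by (rule abs_triangle_ineq)
      then show ?thesis using E0 \<open>\<phi> \<theta> y - \<phi> \<theta>' y = _\<close> by (simp add: abs_mult)
    qed
    also have "\<dots> \<le> C * (\<bar>K\<bar> * D) + (C * (\<alpha> * D)) * \<bar>B\<bar>"
    proof (rule add_mono)
      have "\<bar>P - P'\<bar> \<le> \<bar>K\<bar> * D" using hd unfolding D_def
        by (meson abs_ge_self abs_ge_zero mult_right_mono order_trans)
      then show "E * \<bar>P - P'\<bar> \<le> C * (\<bar>K\<bar> * D)" using EC E0 C0
        by (meson abs_ge_zero mult_mono order_trans)
      show "\<bar>E - E'\<bar> * \<bar>P'\<bar> \<le> C * (\<alpha> * D) * \<bar>B\<bar>"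
        using EE2 hP' by (intro mult_mono) auto
    qed
    also have "\<dots> = C * (\<bar>K\<bar> + \<alpha> * \<bar>B\<bar>) * D" by (simp add: algebra_simps)
    finally show "\<bar>\<phi> \<theta> y - \<phi> \<theta>' y\<bar> \<le> C * (\<bar>K\<bar> + \<alpha> * \<bar>B\<bar>) * \<bar>\<theta> - \<theta>'\<bar>"
      unfolding D_def .
  qed
qed

lemma zero_CF: "(\<lambda>_. 0::real) \<in> CF S" unfolding CF_def by simp

lemma supn_zero: "supn S (\<lambda>_. 0::real) = 0"
proof -
  have "supn S (\<lambda>_. 0::real) \<le> 0" by (rule supn_le) auto
  moreover have "0 \<le> supn S (\<lambda>_. 0::real)" by (rule supn_nonneg[of _ _ 0]) auto
  ultimately show ?thesis by simp
qed

lemma sol_D: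
  assumes "is_solution \<Omega> F f \<phi> \<tau>0 r A \<tau>"
  shows "cont_into {..r} \<Omega> A" "cont_into {0..r} \<Omega> \<tau>"
    "\<forall>t\<in>{0..r}. \<forall>x\<in>\<Omega>. 0 \<le> \<tau> t x"
    "\<forall>t\<le>0. \<forall>x\<in>\<Omega>. A t x = \<phi> t x"
    "\<forall>t\<in>{0..r}. \<forall>x\<in>\<Omega>.
        ((\<lambda>l. F (A l) (\<tau> l) (\<lambda>(z, y). A (l - \<tau> l z) y) x) has_integral (A t x - \<phi> 0 x)) {0..t}"
    "\<forall>t\<in>{0..r}. \<forall>x\<in>\<Omega>.
        integral {t - \<tau> t x..t} (\<lambda>s. f (A s) x) = integral {- \<tau>0 x..0} (\<lambda>s. f (\<phi> s) x)"
proof -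
  note H = assms[unfolded is_solution_def]
  show "cont_into {..r} \<Omega> A" by (rule H[THEN conjunct1])
  show "cont_into {0..r} \<Omega> \<tau>" by (rule H[THEN conjunct2, THEN conjunct1])
  show "\<forall>t\<in>{0..r}. \<forall>x\<in>\<Omega>. 0 \<le> \<tau> t x" by (rule H[THEN conjunct2, THEN conjunct2, THEN conjunct1])
  show "\<forall>t\<le>0. \<forall>x\<in>\<Omega>. A t x = \<phi> t x"
    by (rule H[THEN conjunct2, THEN conjunct2, THEN conjunct2, THEN conjunct1])
  show "\<forall>t\<in>{0..r}. \<forall>x\<in>\<Omega>.
        ((\<lambda>l. F (A l) (\<tau> l) (\<lambda>(z, y). A (l - \<tau> l z) y) x) has_integral (A t x - \<phi> 0 x)) {0..t}"
    by (rule H[THEN conjunct2, THEN conjunct2, THEN conjunct2, THEN conjunct2, THEN conjunct1])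
  show "\<forall>t\<in>{0..r}. \<forall>x\<in>\<Omega>.
        integral {t - \<tau> t x..t} (\<lambda>s. f (A s) x) = integral {- \<tau>0 x..0} (\<lambda>s. f (\<phi> s) x)"
    by (rule H[THEN conjunct2, THEN conjunct2, THEN conjunct2, THEN conjunct2, THEN conjunct2])
qed

lemma G_bound:
  fixes \<Omega> :: "'b::metric_space set"
  assumes "compact \<Omega>" "standing_F \<Omega> F"
    and sol: "is_solution \<Omega> F f \<phi> \<tau>0 r A \<tau>"
  shows "\<exists>BF. \<forall>l\<in>{0..r}. \<forall>x\<in>\<Omega>. \<bar>F (A l) (\<tau> l) (\<lambda>(z, y). A (l - \<tau> l z) y) x\<bar> \<le> BF"
proof -
  note cA = sol_D(1)[OF sol] and c\<tau> = sol_D(2)[OF sol] and \<tau>pos = sol_D(3)[OF sol]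
  obtain R' where R': "R' \<ge> 0" "\<forall>s\<in>{0..r}. \<forall>y\<in>\<Omega>. \<bar>\<tau> s y\<bar> \<le> R'"
    using cont_into_bdd[OF assms(1) c\<tau>, of 0 r] by auto
  obtain MA where MA: "MA \<ge> 0" "\<forall>s\<in>{-R'..r}. \<forall>y\<in>\<Omega>. \<bar>A s y\<bar> \<le> MA"
    using cont_into_bdd[OF assms(1) cA, of "-R'" r] by auto
  define M where "M = max 1 (max MA R')"
  have M0: "M > 0" unfolding M_def by simp
  obtain LF where LF: "LF \<ge> 0" "Flip \<Omega> F M LF"
    using F_lip_pt[OF assms(1,2) M0] by blast
  have Fc: "continuous_on \<Omega> (F (\<lambda>_. 0) (\<lambda>_. 0) (\<lambda>_. 0))"
    by (rule standing_F_cont[OF assms(2) zero_CF zero_CF zero_CF])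
  define S0 where "S0 = supn \<Omega> (F (\<lambda>_. 0) (\<lambda>_. 0) (\<lambda>_. 0))"
  show ?thesis
  proof (intro exI[of _ "LF * (3 * M) + S0"] ballI)
    fix l x assume l: "l \<in> {0..r}" and x: "x \<in> \<Omega>"
    have Al: "A l \<in> CF \<Omega>" using cont_into_D[OF cA] l unfolding CF_def by auto
    have tl: "\<tau> l \<in> CF \<Omega>" using cont_into_D[OF c\<tau>] l unfolding CF_def by auto
    have Wl: "(\<lambda>(z, y). A (l - \<tau> l z) y) \<in> CF (\<Omega> \<times> \<Omega>)"
      by (rule W_cont[OF assms(1) cA c\<tau> \<tau>pos l])
    have lR: "l \<in> {-R'..r}" using l R'(1) by auto
    have bA: "\<forall>y\<in>\<Omega>. \<bar>A l y\<bar> \<le> M"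
    proof
      fix y assume y: "y \<in> \<Omega>"
      have "\<bar>A l y\<bar> \<le> MA" using MA(2) lR y by blast
      then show "\<bar>A l y\<bar> \<le> M" unfolding M_def by (simp add: le_max_iff_disj)
    qed
    have bt: "\<forall>y\<in>\<Omega>. \<bar>\<tau> l y\<bar> \<le> M"
    proof
      fix y assume y: "y \<in> \<Omega>"
      have "\<bar>\<tau> l y\<bar> \<le> R'" using R'(2) l y by blast
      then show "\<bar>\<tau> l y\<bar> \<le> M" unfolding M_def by (simp add: le_max_iff_disj)
    qed
    have bW: "\<forall>p\<in>\<Omega> \<times> \<Omega>. \<bar>(\<lambda>(z, y). A (l - \<tau> l z) y) p\<bar> \<le> M"
    proof
      fix p assume p: "p \<in> \<Omega> \<times> \<Omega>"
      then obtain z y where zy: "p = (z, y)" "z \<in> \<Omega>" "y \<in> \<Omega>" by auto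
      have "0 \<le> \<tau> l z" using \<tau>pos l zy by blast
      moreover have "\<bar>\<tau> l z\<bar> \<le> R'" using R'(2) l zy by blast
      ultimately have "\<tau> l z \<le> R'" by simp
      note \<open>0 \<le> \<tau> l z\<close> this
      then have "l - \<tau> l z \<in> {-R'..r}" using l by auto
      then have "\<bar>A (l - \<tau> l z) y\<bar> \<le> MA" using MA zy by blast
      then show "\<bar>(\<lambda>(z, y). A (l - \<tau> l z) y) p\<bar> \<le> M" using zy unfolding M_def
        by (simp add: le_max_iff_disj)
    qed
    have M0': "0 \<le> M" using M0 by simp
    have z1: "supn \<Omega> (\<lambda>_. 0) \<le> M" using M0' by (simp add: supn_zero)
    have z2: "supn (\<Omega> \<times> \<Omega>) (\<lambda>_. 0) \<le> M" using M0' by (simp add: supn_zero)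
    have "\<bar>F (A l) (\<tau> l) (\<lambda>(z, y). A (l - \<tau> l z) y) x - F (\<lambda>_. 0) (\<lambda>_. 0) (\<lambda>_. 0) x\<bar>
        \<le> LF * (supn \<Omega> (\<lambda>x. A l x - 0) + supn \<Omega> (\<lambda>x. \<tau> l x - 0)
                 + supn (\<Omega> \<times> \<Omega>) (\<lambda>p. (\<lambda>(z, y). A (l - \<tau> l z) y) p - 0))"
      by (rule LF(2)[unfolded Flip_def, rule_format, OF Al tl Wl zero_CF zero_CF zero_CF
          supn_le[OF M0' bA] supn_le[OF M0' bt] supn_le[OF M0' bW] z1 z1 z2 x])
    also have "\<dots> \<le> LF * (3 * M)"
    proof (rule mult_left_mono)
      have "supn \<Omega> (\<lambda>x. A l x - 0) \<le> M" using supn_le[OF M0' bA] by simp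
      moreover have "supn \<Omega> (\<lambda>x. \<tau> l x - 0) \<le> M" using supn_le[OF M0' bt] by simp
      moreover have "supn (\<Omega> \<times> \<Omega>) (\<lambda>p. (\<lambda>(z, y). A (l - \<tau> l z) y) p - 0) \<le> M"
        using supn_le[OF M0' bW] by simp
      ultimately show "supn \<Omega> (\<lambda>x. A l x - 0) + supn \<Omega> (\<lambda>x. \<tau> l x - 0)
                 + supn (\<Omega> \<times> \<Omega>) (\<lambda>p. (\<lambda>(z, y). A (l - \<tau> l z) y) p - 0) \<le> 3 * M" by linarith
    qed (rule LF(1))
    finally have 1: "\<bar>F (A l) (\<tau> l) (\<lambda>(z, y). A (l - \<tau> l z) y) x - F (\<lambda>_. 0) (\<lambda>_. 0) (\<lambda>_. 0) x\<bar>
        \<le> LF * (3 * M)" .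
    have 2: "\<bar>F (\<lambda>_. 0) (\<lambda>_. 0) (\<lambda>_. 0) x\<bar> \<le> S0"
      unfolding S0_def by (rule supn_ge_cont[OF assms(1) Fc x])
    show "\<bar>F (A l) (\<tau> l) (\<lambda>(z, y). A (l - \<tau> l z) y) x\<bar> \<le> LF * (3 * M) + S0"
      using 1 2 by linarith
  qed
qed

lemma A_lip:
  fixes \<Omega> :: "'b::metric_space set"
  assumes "compact \<Omega>" "\<alpha> \<ge> 0" "standing_F \<Omega> F" "in_Lip_alpha \<alpha> \<Omega> \<phi>"
    and sol: "is_solution \<Omega> F f \<phi> \<tau>0 r A \<tau>" and "R \<ge> 0"
  shows "\<exists>K\<ge>0. \<forall>s\<in>{-R..r}. \<forall>s'\<in>{-R..r}. \<forall>y\<in>\<Omega>. \<bar>A s y - A s' y\<bar> \<le> K * \<bar>s - s'\<bar>"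
proof -
  note A\<phi> = sol_D(4)[OF sol] and hint = sol_D(5)[OF sol]
  obtain BF where BF: "\<forall>l\<in>{0..r}. \<forall>x\<in>\<Omega>. \<bar>F (A l) (\<tau> l) (\<lambda>(z, y). A (l - \<tau> l z) y) x\<bar> \<le> BF"
    using G_bound[OF assms(1,3) sol] by (elim exE)
  obtain K1 where K1: "K1 \<ge> 0" "\<forall>\<theta>\<in>{-R..0}. \<forall>\<theta>'\<in>{-R..0}. \<forall>y\<in>\<Omega>. \<bar>\<phi> \<theta> y - \<phi> \<theta>' y\<bar> \<le> K1 * \<bar>\<theta> - \<theta>'\<bar>"
    using phi_lip[OF assms(1,2,4,6)] by (elim exE conjE)
  define B where "B = max BF 0"
  have B0: "B \<ge> 0" unfolding B_def by simp
  have pos: "\<bar>A t y - A s y\<bar> \<le> B * (t - s)" if s0: "0 \<le> s" and st: "s \<le> t" and tr: "t \<le> r"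
    and y: "y \<in> \<Omega>" for s t y
  proof -
    define g where "g = (\<lambda>l. F (A l) (\<tau> l) (\<lambda>(z, y). A (l - \<tau> l z) y) y)"
    have tI: "t \<in> {0..r}" and sI: "s \<in> {0..r}" using s0 st tr by auto
    have ht: "(g has_integral (A t y - \<phi> 0 y)) {0..t}"
      using hint[rule_format, OF tI y] unfolding g_def .
    have hs: "(g has_integral (A s y - \<phi> 0 y)) {0..s}"
      using hint[rule_format, OF sI y] unfolding g_def .
    have int_t: "g integrable_on {0..t}" using ht by (rule has_integral_integrable)
    have comb: "integral {0..s} g + integral {s..t} g = integral {0..t} g"
      by (rule Henstock_Kurzweil_Integration.integral_combine[OF s0 st int_t])
    have "integral {0..t} g = A t y - \<phi> 0 y" using ht by (rule integral_unique)
    moreover have "integral {0..s} g = A s y - \<phi> 0 y" using hs by (rule integral_unique)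
    ultimately have eq: "integral {s..t} g = A t y - A s y" using comb by linarith
    have int_st: "g integrable_on {s..t}"
      by (rule integrable_subinterval_real[OF int_t]) (use s0 in auto)
    have "\<forall>l\<in>{s..t}. \<bar>g l\<bar> \<le> B"
    proof
      fix l assume "l \<in> {s..t}"
      then have "l \<in> {0..r}" using s0 tr by auto
      then have "\<bar>g l\<bar> \<le> BF" using BF y unfolding g_def by blast
      then show "\<bar>g l\<bar> \<le> B" unfolding B_def by simp
    qed
    from int_abs_bound[OF int_st st this] show ?thesis using eq by simp
  qed
  have one: "\<bar>A s' y - A s y\<bar> \<le> (K1 + B) * (s' - s)"
    if s: "s \<in> {-R..r}" and s': "s' \<in> {-R..r}" and ss: "s \<le> s'" and y: "y \<in> \<Omega>" for s s' y
  proof (cases "s' \<le> 0")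
    case True
    have "A s' y = \<phi> s' y" "A s y = \<phi> s y" using A\<phi> True ss y by auto
    moreover have "s' \<in> {-R..0}" "s \<in> {-R..0}" using s s' True ss by auto
    then have "\<bar>\<phi> s' y - \<phi> s y\<bar> \<le> K1 * \<bar>s' - s\<bar>" using K1(2)[rule_format, OF _ _ y] by blast
    moreover have "K1 * \<bar>s' - s\<bar> \<le> (K1 + B) * (s' - s)" using ss B0
      by (simp add: mult_right_mono)
    ultimately show ?thesis by simp
  next
    case False
    show ?thesis
    proof (cases "0 \<le> s")
      case True
      have "\<bar>A s' y - A s y\<bar> \<le> B * (s' - s)" using pos[OF True ss _ y] s' by auto
      also have "\<dots> \<le> (K1 + B) * (s' - s)" using ss K1(1) by (simp add: mult_right_mono)
      finally show ?thesis .
    next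
      case s0: False
      have 1: "\<bar>A s' y - A 0 y\<bar> \<le> B * (s' - 0)" using pos[of 0 s' y] False s' y by auto
      have "A 0 y = \<phi> 0 y" "A s y = \<phi> s y" using A\<phi> s0 y by auto
      moreover have "(0::real) \<in> {-R..0}" "s \<in> {-R..0}" using s s0 \<open>R \<ge> 0\<close> by auto
      then have "\<bar>\<phi> 0 y - \<phi> s y\<bar> \<le> K1 * \<bar>0 - s\<bar>" using K1(2)[rule_format, OF _ _ y] by blast
      ultimately have 2: "\<bar>A 0 y - A s y\<bar> \<le> K1 * (0 - s)" using s0 by simp
      have "B * s' \<le> B * (s' - s)" using s0 B0 by (simp add: mult_left_mono)
      moreover have "K1 * (0 - s) \<le> K1 * (s' - s)" using False K1(1)
        by (intro mult_left_mono) auto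
      ultimately have "\<bar>A s' y - A 0 y\<bar> + \<bar>A 0 y - A s y\<bar> \<le> (K1 + B) * (s' - s)"
        using 1 2 by (simp add: algebra_simps)
      moreover have "\<bar>A s' y - A s y\<bar> \<le> \<bar>A s' y - A 0 y\<bar> + \<bar>A 0 y - A s y\<bar>"
        using abs_triangle_ineq[of "A s' y - A 0 y" "A 0 y - A s y"] by simp
      ultimately show ?thesis by linarith
    qed
  qed
  show ?thesis
  proof (intro exI[of _ "K1 + B"] conjI ballI)
    show "0 \<le> K1 + B" using K1(1) B0 by simp
    fix s s' y assume s: "s \<in> {-R..r}" and s': "s' \<in> {-R..r}" and y: "y \<in> \<Omega>"
    show "\<bar>A s y - A s' y\<bar> \<le> (K1 + B) * \<bar>s - s'\<bar>"
    proof (cases "s \<le> s'")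
      case True
      then show ?thesis using one[OF s s' True y] by (simp add: abs_minus_commute)
    next
      case False
      then show ?thesis using one[OF s' s _ y] by simp
    qed
  qed
qed

lemma tau_diff1:
  fixes \<Omega> :: "'b::metric_space set"
  assumes "compact \<Omega>" and fl: "flip \<Omega> f Lf" "Lf \<ge> 0"
    and s1: "is_solution \<Omega> F f \<phi> \<tau>0 r A1 \<tau>1" and s2: "is_solution \<Omega> F f \<phi> \<tau>0 r A2 \<tau>2"
    and l: "l \<in> {0..r}" and z: "z \<in> \<Omega>"
    and T: "\<tau>2 l z \<le> \<tau>1 l z" "\<tau>1 l z \<le> R"
    and m: "m > 0" "\<forall>s\<in>{-R..r}. m \<le> f (A1 s) z"
    and E: "E \<ge> 0" "\<forall>s\<in>{-R..l}. \<forall>y\<in>\<Omega>. \<bar>A1 s y - A2 s y\<bar> \<le> E"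
  shows "\<tau>1 l z - \<tau>2 l z \<le> R * Lf * E / m"
proof -
  define T1 where "T1 = \<tau>1 l z"
  define T2 where "T2 = \<tau>2 l z"
  define h1 where "h1 = (\<lambda>s. f (A1 s) z)"
  define h2 where "h2 = (\<lambda>s. f (A2 s) z)"
  have T20: "0 \<le> T2" using sol_D(3)[OF s2] l z unfolding T2_def by blast
  have T21: "T2 \<le> T1" "T1 \<le> R" using T unfolding T1_def T2_def by auto
  have c1: "continuous_on {..r} h1" unfolding h1_def
    by (rule cont_f_along[OF assms(1) sol_D(1)[OF s1] fl(2) fl(1) z])
  have c2: "continuous_on {..r} h2" unfolding h2_def
    by (rule cont_f_along[OF assms(1) sol_D(1)[OF s2] fl(2) fl(1) z])
  have sub: "{l - T1..l} \<subseteq> {..r}" using l by auto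
  have i1: "h1 integrable_on {l - T1..l}"
    by (rule integrable_continuous_interval[OF continuous_on_subset[OF c1 sub]])
  have sub2: "{l - T2..l} \<subseteq> {..r}" using l by auto
  have i1': "h1 integrable_on {l - T2..l}"
    by (rule integrable_continuous_interval[OF continuous_on_subset[OF c1 sub2]])
  have i2': "h2 integrable_on {l - T2..l}"
    by (rule integrable_continuous_interval[OF continuous_on_subset[OF c2 sub2]])
  have eq: "integral {l - T1..l} h1 = integral {l - T2..l} h2"
    using sol_D(6)[OF s1, rule_format, OF l z] sol_D(6)[OF s2, rule_format, OF l z]
    unfolding T1_def T2_def h1_def h2_def by simp
  have comb: "integral {l - T1..l - T2} h1 + integral {l - T2..l} h1 = integral {l - T1..l} h1"
    by (rule Henstock_Kurzweil_Integration.integral_combine[OF _ _ i1]) (use T21 T20 in auto)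
  have i1'': "h1 integrable_on {l - T1..l - T2}"
    by (rule integrable_subinterval_real[OF i1]) (use T20 in auto)
  have "m * ((l - T2) - (l - T1)) \<le> integral {l - T1..l - T2} h1"
  proof (rule int_lower_bound[OF i1''])
    show "l - T1 \<le> l - T2" using T21 by simp
    show "\<forall>t\<in>{l - T1..l - T2}. m \<le> h1 t"
    proof
      fix t assume t: "t \<in> {l - T1..l - T2}"
      then have "t \<in> {-R..r}" using l T21 T20 by auto
      then show "m \<le> h1 t" using m(2) unfolding h1_def by blast
    qed
  qed
  then have low: "m * (T1 - T2) \<le> integral {l - T2..l} (\<lambda>s. h2 s - h1 s)"
    using eq comb integral_diff[OF i2' i1'] by simp
  have "integral {l - T2..l} (\<lambda>s. h2 s - h1 s) \<le> \<bar>integral {l - T2..l} (\<lambda>s. h2 s - h1 s)\<bar>" by simp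
  also have "\<dots> \<le> (Lf * E) * (l - (l - T2))"
  proof (rule int_abs_bound)
    show "(\<lambda>s. h2 s - h1 s) integrable_on {l - T2..l}" using i2' i1' by (rule integrable_diff)
    show "l - T2 \<le> l" using T20 by simp
    show "\<forall>t\<in>{l - T2..l}. \<bar>h2 t - h1 t\<bar> \<le> Lf * E"
    proof
      fix t assume t: "t \<in> {l - T2..l}"
      then have tr: "t \<in> {..r}" using l by auto
      have tR: "t \<in> {-R..l}" using t T21 T20 l by auto
      have a1: "A1 t \<in> CF \<Omega>" using cont_into_D[OF sol_D(1)[OF s1] tr] unfolding CF_def by simp
      have a2: "A2 t \<in> CF \<Omega>" using cont_into_D[OF sol_D(1)[OF s2] tr] unfolding CF_def by simp
      have "\<bar>h2 t - h1 t\<bar> \<le> Lf * supn \<Omega> (\<lambda>x. A2 t x - A1 t x)"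
        using fl(1)[unfolded flip_def, rule_format, OF a2 a1 z] unfolding h1_def h2_def .
      also have "\<dots> \<le> Lf * E"
      proof (rule mult_left_mono[OF _ fl(2)])
        show "supn \<Omega> (\<lambda>x. A2 t x - A1 t x) \<le> E"
        proof (rule supn_le[OF E(1)])
          show "\<forall>x\<in>\<Omega>. \<bar>A2 t x - A1 t x\<bar> \<le> E" using E(2) tR by (simp add: abs_minus_commute)
        qed
      qed
      finally show "\<bar>h2 t - h1 t\<bar> \<le> Lf * E" .
    qed
  qed
  also have "\<dots> \<le> (Lf * E) * R" using T21 T20 fl(2) E(1) by (intro mult_left_mono) auto
  finally have "m * (T1 - T2) \<le> R * Lf * E" using low by (simp add: algebra_simps)
  then have "T1 - T2 \<le> R * Lf * E / m" using m(1) by (simp add: pos_le_divide_eq mult.commute)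
  then show ?thesis unfolding T1_def T2_def .
qed

lemma tau_diff:
  fixes \<Omega> :: "'b::metric_space set"
  assumes "compact \<Omega>" and fl: "flip \<Omega> f Lf" "Lf \<ge> 0"
    and s1: "is_solution \<Omega> F f \<phi> \<tau>0 r A1 \<tau>1" and s2: "is_solution \<Omega> F f \<phi> \<tau>0 r A2 \<tau>2"
    and l: "l \<in> {0..r}" and z: "z \<in> \<Omega>"
    and T: "\<tau>1 l z \<le> R" "\<tau>2 l z \<le> R"
    and m: "m > 0" "\<forall>s\<in>{-R..r}. m \<le> f (A1 s) z" "\<forall>s\<in>{-R..r}. m \<le> f (A2 s) z"
    and E: "E \<ge> 0" "\<forall>s\<in>{-R..l}. \<forall>y\<in>\<Omega>. \<bar>A1 s y - A2 s y\<bar> \<le> E"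
  shows "\<bar>\<tau>1 l z - \<tau>2 l z\<bar> \<le> R * Lf * E / m"
proof (cases "\<tau>2 l z \<le> \<tau>1 l z")
  case True
  have "\<tau>1 l z - \<tau>2 l z \<le> R * Lf * E / m"
    by (rule tau_diff1[OF assms(1) fl s1 s2 l z True T(1) m(1,2) E])
  then show ?thesis using True by simp
next
  case False
  have E': "\<forall>s\<in>{-R..l}. \<forall>y\<in>\<Omega>. \<bar>A2 s y - A1 s y\<bar> \<le> E" using E(2) by (simp add: abs_minus_commute)
  have "\<tau>2 l z - \<tau>1 l z \<le> R * Lf * E / m"
    by (rule tau_diff1[OF assms(1) fl s2 s1 l z _ T(2) m(1,3) E(1) E']) (use False in simp)
  then show ?thesis using False by simp
qed

lemma standing_f_pos:
  assumes "standing_f \<Omega> f" "u \<in> CF \<Omega>" "x \<in> \<Omega>"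
  shows "0 < f u x"
proof -
  obtain Mf where "\<forall>u\<in>CF \<Omega>. \<forall>x\<in>\<Omega>. 0 < f u x \<and> f u x \<le> Mf"
    using assms(1)[unfolded standing_f_def, THEN conjunct2, THEN conjunct2, THEN conjunct1] by (elim exE)
  then show ?thesis using assms(2,3) by blast
qed

lemma standing_f_mono:
  assumes "standing_f \<Omega> f" "u \<in> CF \<Omega>" "v \<in> CF \<Omega>" "\<forall>x\<in>\<Omega>. u x \<le> v x" "x \<in> \<Omega>"
  shows "f v x \<le> f u x"
  using assms(1)[unfolded standing_f_def, THEN conjunct2, THEN conjunct2, THEN conjunct2] assms(2-5)
  by blast

lemma standing_f_cont:
  assumes "standing_f \<Omega> f" "u \<in> CF \<Omega>"
  shows "continuous_on \<Omega> (f u)"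
  using assms(1)[unfolded standing_f_def, THEN conjunct1] assms(2) by blast

lemma G_diff:
  fixes \<Omega> :: "'b::metric_space set"
  assumes cpt: "compact \<Omega>" and FL: "Flip \<Omega> F M LF" "LF \<ge> 0"
    and s1: "is_solution \<Omega> F f \<phi> \<tau>0 r A1 \<tau>1" and s2: "is_solution \<Omega> F f \<phi> \<tau>0 r A2 \<tau>2"
    and R: "R \<ge> 0" "\<forall>l\<in>{0..r}. \<forall>z\<in>\<Omega>. \<tau>1 l z \<le> R \<and> \<tau>2 l z \<le> R"
    and MA: "\<forall>s\<in>{-R..r}. \<forall>y\<in>\<Omega>. \<bar>A1 s y\<bar> \<le> M \<and> \<bar>A2 s y\<bar> \<le> M" "R \<le> M"
    and Lip: "LipA \<ge> 0" "\<forall>s\<in>{-R..r}. \<forall>s'\<in>{-R..r}. \<forall>y\<in>\<Omega>. \<bar>A1 s y - A1 s' y\<bar> \<le> LipA * \<bar>s - s'\<bar>"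
    and Ct: "C \<ge> 0" "\<forall>l\<in>{0..r}. \<forall>E\<ge>0. (\<forall>s\<in>{-R..l}. \<forall>y\<in>\<Omega>. \<bar>A1 s y - A2 s y\<bar> \<le> E) \<longrightarrow>
                 (\<forall>z\<in>\<Omega>. \<bar>\<tau>1 l z - \<tau>2 l z\<bar> \<le> C * E)"
    and l: "l \<in> {0..r}" and E: "E \<ge> 0" "\<forall>s\<in>{-R..l}. \<forall>y\<in>\<Omega>. \<bar>A1 s y - A2 s y\<bar> \<le> E"
    and x: "x \<in> \<Omega>"
  shows "\<bar>F (A1 l) (\<tau>1 l) (\<lambda>(z, y). A1 (l - \<tau>1 l z) y) x - F (A2 l) (\<tau>2 l) (\<lambda>(z, y). A2 (l - \<tau>2 l z) y) x\<bar>
          \<le> LF * (2 + C + LipA * C) * E"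
proof -
  have M0: "0 \<le> M" using R MA(2) by simp
  have lr: "l \<in> {..r}" and lR: "l \<in> {-R..r}" using l R(1) by auto
  have A1l: "A1 l \<in> CF \<Omega>" using cont_into_D[OF sol_D(1)[OF s1] lr] unfolding CF_def by simp
  have A2l: "A2 l \<in> CF \<Omega>" using cont_into_D[OF sol_D(1)[OF s2] lr] unfolding CF_def by simp
  have t1l: "\<tau>1 l \<in> CF \<Omega>" using cont_into_D[OF sol_D(2)[OF s1] l] unfolding CF_def by simp
  have t2l: "\<tau>2 l \<in> CF \<Omega>" using cont_into_D[OF sol_D(2)[OF s2] l] unfolding CF_def by simp
  have W1: "(\<lambda>(z, y). A1 (l - \<tau>1 l z) y) \<in> CF (\<Omega> \<times> \<Omega>)"
    by (rule W_cont[OF cpt sol_D(1)[OF s1] sol_D(2)[OF s1] sol_D(3)[OF s1] l])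
  have W2: "(\<lambda>(z, y). A2 (l - \<tau>2 l z) y) \<in> CF (\<Omega> \<times> \<Omega>)"
    by (rule W_cont[OF cpt sol_D(1)[OF s2] sol_D(2)[OF s2] sol_D(3)[OF s2] l])
  have tb: "0 \<le> \<tau>1 l z \<and> \<tau>1 l z \<le> R \<and> 0 \<le> \<tau>2 l z \<and> \<tau>2 l z \<le> R" if z: "z \<in> \<Omega>" for z
    using sol_D(3)[OF s1] sol_D(3)[OF s2] R(2) l z by blast
  have bA1: "\<forall>y\<in>\<Omega>. \<bar>A1 l y\<bar> \<le> M" using MA(1) lR by blast
  have bA2: "\<forall>y\<in>\<Omega>. \<bar>A2 l y\<bar> \<le> M" using MA(1) lR by blast
  have bt1: "\<forall>y\<in>\<Omega>. \<bar>\<tau>1 l y\<bar> \<le> M" using tb MA(2) by fastforce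
  have bt2: "\<forall>y\<in>\<Omega>. \<bar>\<tau>2 l y\<bar> \<le> M" using tb MA(2) by fastforce
  have bW1: "\<forall>p\<in>\<Omega> \<times> \<Omega>. \<bar>(\<lambda>(z, y). A1 (l - \<tau>1 l z) y) p\<bar> \<le> M"
  proof
    fix p assume "p \<in> \<Omega> \<times> \<Omega>"
    then obtain z y where zy: "p = (z, y)" "z \<in> \<Omega>" "y \<in> \<Omega>" by auto
    have "l - \<tau>1 l z \<in> {-R..r}" using tb[OF zy(2)] l by auto
    then show "\<bar>(\<lambda>(z, y). A1 (l - \<tau>1 l z) y) p\<bar> \<le> M" using MA(1) zy by auto
  qed
  have bW2: "\<forall>p\<in>\<Omega> \<times> \<Omega>. \<bar>(\<lambda>(z, y). A2 (l - \<tau>2 l z) y) p\<bar> \<le> M"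
  proof
    fix p assume "p \<in> \<Omega> \<times> \<Omega>"
    then obtain z y where zy: "p = (z, y)" "z \<in> \<Omega>" "y \<in> \<Omega>" by auto
    have "l - \<tau>2 l z \<in> {-R..r}" using tb[OF zy(2)] l by auto
    then show "\<bar>(\<lambda>(z, y). A2 (l - \<tau>2 l z) y) p\<bar> \<le> M" using MA(1) zy by auto
  qed
  have main: "\<bar>F (A1 l) (\<tau>1 l) (\<lambda>(z, y). A1 (l - \<tau>1 l z) y) x - F (A2 l) (\<tau>2 l) (\<lambda>(z, y). A2 (l - \<tau>2 l z) y) x\<bar>
     \<le> LF * (supn \<Omega> (\<lambda>x. A1 l x - A2 l x) + supn \<Omega> (\<lambda>x. \<tau>1 l x - \<tau>2 l x)
                 + supn (\<Omega> \<times> \<Omega>) (\<lambda>p. (\<lambda>(z, y). A1 (l - \<tau>1 l z) y) p - (\<lambda>(z, y). A2 (l - \<tau>2 l z) y) p))"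
    by (rule FL(1)[unfolded Flip_def, rule_format, OF A1l t1l W1 A2l t2l W2
          supn_le[OF M0 bA1] supn_le[OF M0 bt1] supn_le[OF M0 bW1]
          supn_le[OF M0 bA2] supn_le[OF M0 bt2] supn_le[OF M0 bW2] x])
  have lRl: "l \<in> {-R..l}" using l R(1) by auto
  have S1: "supn \<Omega> (\<lambda>x. A1 l x - A2 l x) \<le> E"
    by (rule supn_le[OF E(1)]) (use E(2) lRl in blast)
  have tdiff: "\<forall>z\<in>\<Omega>. \<bar>\<tau>1 l z - \<tau>2 l z\<bar> \<le> C * E" using Ct(2) l E by blast
  have CE0: "0 \<le> C * E" using Ct(1) E(1) by simp
  have S2: "supn \<Omega> (\<lambda>x. \<tau>1 l x - \<tau>2 l x) \<le> C * E"
    by (rule supn_le[OF CE0 tdiff])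
  have WE0: "0 \<le> (LipA * C + 1) * E" using Lip(1) Ct(1) E(1) by simp
  have S3: "supn (\<Omega> \<times> \<Omega>) (\<lambda>p. (\<lambda>(z, y). A1 (l - \<tau>1 l z) y) p - (\<lambda>(z, y). A2 (l - \<tau>2 l z) y) p)
     \<le> (LipA * C + 1) * E"
  proof (rule supn_le[OF WE0], rule ballI)
    fix p assume "p \<in> \<Omega> \<times> \<Omega>"
    then obtain z y where zy: "p = (z, y)" "z \<in> \<Omega>" "y \<in> \<Omega>" by auto
    define T1 where "T1 = \<tau>1 l z"
    define T2 where "T2 = \<tau>2 l z"
    have T: "0 \<le> T1" "T1 \<le> R" "0 \<le> T2" "T2 \<le> R" using tb[OF zy(2)] unfolding T1_def T2_def by auto
    have r1: "l - T1 \<in> {-R..r}" "l - T2 \<in> {-R..r}" using T l by auto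
    have r2: "l - T2 \<in> {-R..l}" using T l by auto
    have a: "\<bar>A1 (l - T1) y - A1 (l - T2) y\<bar> \<le> LipA * \<bar>(l - T1) - (l - T2)\<bar>"
      using Lip(2) r1 zy(3) by blast
    have "\<bar>(l - T1) - (l - T2)\<bar> = \<bar>\<tau>1 l z - \<tau>2 l z\<bar>" unfolding T1_def T2_def by simp
    also have "\<dots> \<le> C * E" using tdiff zy(2) by blast
    finally have "LipA * \<bar>(l - T1) - (l - T2)\<bar> \<le> LipA * (C * E)"
      using Lip(1) by (rule mult_left_mono)
    with a have a': "\<bar>A1 (l - T1) y - A1 (l - T2) y\<bar> \<le> LipA * (C * E)" by linarith
    have b: "\<bar>A1 (l - T2) y - A2 (l - T2) y\<bar> \<le> E" using E(2) r2 zy(3) by blast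
    have "\<bar>A1 (l - T1) y - A2 (l - T2) y\<bar> \<le> \<bar>A1 (l - T1) y - A1 (l - T2) y\<bar> + \<bar>A1 (l - T2) y - A2 (l - T2) y\<bar>"
      using abs_triangle_ineq[of "A1 (l - T1) y - A1 (l - T2) y" "A1 (l - T2) y - A2 (l - T2) y"] by simp
    also have "\<dots> \<le> (LipA * C + 1) * E" using a' b by (simp add: algebra_simps)
    finally show "\<bar>(\<lambda>(z, y). A1 (l - \<tau>1 l z) y) p - (\<lambda>(z, y). A2 (l - \<tau>2 l z) y) p\<bar> \<le> (LipA * C + 1) * E"
      using zy unfolding T1_def T2_def by simp
  qed
  have "LF * (supn \<Omega> (\<lambda>x. A1 l x - A2 l x) + supn \<Omega> (\<lambda>x. \<tau>1 l x - \<tau>2 l x)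
                 + supn (\<Omega> \<times> \<Omega>) (\<lambda>p. (\<lambda>(z, y). A1 (l - \<tau>1 l z) y) p - (\<lambda>(z, y). A2 (l - \<tau>2 l z) y) p))
        \<le> LF * (E + C * E + (LipA * C + 1) * E)"
    using S1 S2 S3 FL(2) by (intro mult_left_mono) auto
  also have "\<dots> = LF * (2 + C + LipA * C) * E" by (simp add: algebra_simps)
  finally show ?thesis using main by linarith
qed

lemma step_lemma:
  fixes \<Omega> :: "'b::metric_space set"
  assumes cpt: "compact \<Omega>"
    and s1: "is_solution \<Omega> F f \<phi> \<tau>0 r A1 \<tau>1" and s2: "is_solution \<Omega> F f \<phi> \<tau>0 r A2 \<tau>2"
    and Gd: "\<forall>l\<in>{0..r}. \<forall>E\<ge>0. (\<forall>s\<in>{-R..l}. \<forall>y\<in>\<Omega>. \<bar>A1 s y - A2 s y\<bar> \<le> E) \<longrightarrow>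
       (\<forall>x\<in>\<Omega>. \<bar>F (A1 l) (\<tau>1 l) (\<lambda>(z, y). A1 (l - \<tau>1 l z) y) x
                - F (A2 l) (\<tau>2 l) (\<lambda>(z, y). A2 (l - \<tau>2 l z) y) x\<bar> \<le> K * E)"
    and K: "K \<ge> 0" and R: "R \<ge> 0"
    and MA: "\<forall>s\<in>{-R..r}. \<forall>y\<in>\<Omega>. \<bar>A1 s y\<bar> \<le> M \<and> \<bar>A2 s y\<bar> \<le> M"
    and d: "\<delta> > 0" "K * \<delta> \<le> 1/2"
    and a: "0 \<le> a" "a \<le> r" and eq: "\<forall>t\<le>a. \<forall>x\<in>\<Omega>. A1 t x = A2 t x"
  shows "\<forall>t\<le>min (a + \<delta>) r. \<forall>x\<in>\<Omega>. A1 t x = A2 t x"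
proof -
  define b where "b = min (a + \<delta>) r"
  have ab: "a \<le> b" "b \<le> r" "b - a \<le> \<delta>" using a d unfolding b_def by auto
  define S where "S = (\<lambda>p. \<bar>A1 (fst p) (snd p) - A2 (fst p) (snd p)\<bar>) ` ({a..b} \<times> \<Omega>)"
  define E where "E = Sup (insert 0 S)"
  have bdd: "bdd_above (insert 0 S)"
  proof (rule bdd_aboveI[of _ "max 0 (2 * M)"])
    fix v assume "v \<in> insert 0 S"
    then consider "v = 0" | s y where "s \<in> {a..b}" "y \<in> \<Omega>" "v = \<bar>A1 s y - A2 s y\<bar>"
      unfolding S_def by auto
    then show "v \<le> max 0 (2 * M)"
    proof cases
      case 1
      then show ?thesis by simp
    next
      case 2
      then have "s \<in> {-R..r}" using a ab R by auto
      then have "\<bar>A1 s y\<bar> \<le> M" "\<bar>A2 s y\<bar> \<le> M" using MA 2 by blast+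
      then show ?thesis using 2 by linarith
    qed
  qed
  have E0: "0 \<le> E" unfolding E_def by (rule cSup_upper[OF _ bdd]) simp
  have Eb: "\<bar>A1 s y - A2 s y\<bar> \<le> E" if "s \<le> b" "y \<in> \<Omega>" for s y
  proof (cases "s \<le> a")
    case True
    then show ?thesis using eq that E0 by simp
  next
    case False
    then have "\<bar>A1 s y - A2 s y\<bar> \<in> insert 0 S" unfolding S_def using that
      by (intro insertI2 image_eqI[of _ _ "(s, y)"]) auto
    then show ?thesis unfolding E_def by (rule cSup_upper[OF _ bdd])
  qed
  have half: "\<bar>A1 t x - A2 t x\<bar> \<le> E / 2" if t: "t \<in> {a..b}" and x: "x \<in> \<Omega>" for t x
  proof -
    define g where "g = (\<lambda>l. F (A1 l) (\<tau>1 l) (\<lambda>(z, y). A1 (l - \<tau>1 l z) y) x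
                - F (A2 l) (\<tau>2 l) (\<lambda>(z, y). A2 (l - \<tau>2 l z) y) x)"
    have tI: "t \<in> {0..r}" using t a ab by auto
    have h: "(g has_integral ((A1 t x - \<phi> 0 x) - (A2 t x - \<phi> 0 x))) {0..t}"
      unfolding g_def
      by (rule has_integral_diff[OF sol_D(5)[OF s1, rule_format, OF tI x] sol_D(5)[OF s2, rule_format, OF tI x]])
    have int_t: "g integrable_on {0..t}" using h by (rule has_integral_integrable)
    have "integral {0..t} g = A1 t x - A2 t x" using integral_unique[OF h] by simp
    moreover have comb: "integral {0..a} g + integral {a..t} g = integral {0..t} g"
      by (rule Henstock_Kurzweil_Integration.integral_combine[OF a(1) _ int_t]) (use t in simp)
    moreover have "\<bar>integral {0..a} g\<bar> \<le> 0 * (a - 0)"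
    proof (rule int_abs_bound)
      show "g integrable_on {0..a}" by (rule integrable_subinterval_real[OF int_t]) (use t in auto)
      show "0 \<le> a" by (rule a(1))
      show "\<forall>l\<in>{0..a}. \<bar>g l\<bar> \<le> 0"
      proof
        fix l assume l: "l \<in> {0..a}"
        then have lI: "l \<in> {0..r}" using a by auto
        have "\<forall>s\<in>{-R..l}. \<forall>y\<in>\<Omega>. \<bar>A1 s y - A2 s y\<bar> \<le> 0" using eq l by auto
        then have "\<forall>x\<in>\<Omega>. \<bar>F (A1 l) (\<tau>1 l) (\<lambda>(z, y). A1 (l - \<tau>1 l z) y) x
                - F (A2 l) (\<tau>2 l) (\<lambda>(z, y). A2 (l - \<tau>2 l z) y) x\<bar> \<le> K * 0"
          using Gd lI by blast
        then show "\<bar>g l\<bar> \<le> 0" using x unfolding g_def by simp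
      qed
    qed
    moreover have "\<bar>integral {a..t} g\<bar> \<le> (K * E) * (t - a)"
    proof (rule int_abs_bound)
      show "g integrable_on {a..t}" by (rule integrable_subinterval_real[OF int_t]) (use a in auto)
      show "a \<le> t" using t by simp
      show "\<forall>l\<in>{a..t}. \<bar>g l\<bar> \<le> K * E"
      proof
        fix l assume l: "l \<in> {a..t}"
        then have lI: "l \<in> {0..r}" using a t ab by auto
        have "\<forall>s\<in>{-R..l}. \<forall>y\<in>\<Omega>. \<bar>A1 s y - A2 s y\<bar> \<le> E" using Eb l t by auto
        then have "\<forall>x\<in>\<Omega>. \<bar>F (A1 l) (\<tau>1 l) (\<lambda>(z, y). A1 (l - \<tau>1 l z) y) x
                - F (A2 l) (\<tau>2 l) (\<lambda>(z, y). A2 (l - \<tau>2 l z) y) x\<bar> \<le> K * E"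
          using Gd lI E0 by blast
        then show "\<bar>g l\<bar> \<le> K * E" using x unfolding g_def by simp
      qed
    qed
    moreover have "(K * E) * (t - a) \<le> (K * E) * \<delta>"
      using t ab K E0 by (intro mult_left_mono) auto
    moreover have "(K * E) * \<delta> \<le> E / 2"
    proof -
      have "(K * E) * \<delta> = E * (K * \<delta>)" by (simp add: algebra_simps)
      also have "\<dots> \<le> E * (1/2)" using d(2) E0 by (rule mult_left_mono)
      finally show ?thesis by simp
    qed
    ultimately show ?thesis by linarith
  qed
  have "E \<le> E / 2" unfolding E_def
  proof (rule cSup_least)
    show "insert 0 S \<noteq> {}" by simp
    fix v assume "v \<in> insert 0 S"
    then consider "v = 0" | s y where "s \<in> {a..b}" "y \<in> \<Omega>" "v = \<bar>A1 s y - A2 s y\<bar>"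
      unfolding S_def by auto
    then show "v \<le> Sup (insert 0 S) / 2"
    proof cases
      case 1
      then show ?thesis using E0 unfolding E_def by simp
    next
      case 2
      then show ?thesis using half[OF 2(1,2)] unfolding E_def by simp
    qed
  qed
  then have "E \<le> 0" by simp
  then show ?thesis unfolding b_def[symmetric] using Eb by force
qed

theorem lemma4p3:
  fixes \<Omega> :: "(real ^ 'n) set"
    and F :: "((real ^ 'n) \<Rightarrow> real) \<Rightarrow> ((real ^ 'n) \<Rightarrow> real) \<Rightarrow> ((real ^ 'n) \<times> (real ^ 'n) \<Rightarrow> real) \<Rightarrow> ((real ^ 'n) \<Rightarrow> real)"
    and f :: "((real ^ 'n) \<Rightarrow> real) \<Rightarrow> ((real ^ 'n) \<Rightarrow> real)"
    and \<phi> A1 \<tau>1 A2 \<tau>2 :: "real \<Rightarrow> (real ^ 'n) \<Rightarrow> real"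
    and \<tau>0 :: "(real ^ 'n) \<Rightarrow> real"
    and \<alpha> M0 r :: real
  assumes "compact \<Omega>"
    and "\<alpha> \<ge> 0"
    and "standing_F \<Omega> F"
    and "standing_f \<Omega> f"
    and "M0 > 0"
    and "in_Lip_alpha \<alpha> \<Omega> \<phi>"
    and "continuous_on \<Omega> \<tau>0" and "\<forall>x\<in>\<Omega>. 0 \<le> \<tau>0 x"
    and "Lip_alpha_norm \<alpha> \<Omega> \<phi> + supn \<Omega> \<tau>0 \<le> M0"
    and "r > 0"
    and "is_solution \<Omega> F f \<phi> \<tau>0 r A1 \<tau>1"
    and "is_solution \<Omega> F f \<phi> \<tau>0 r A2 \<tau>2"
  shows "(\<forall>t\<le>r. \<forall>x\<in>\<Omega>. A1 t x = A2 t x) \<and> (\<forall>t\<in>{0..r}. \<forall>x\<in>\<Omega>. \<tau>1 t x = \<tau>2 t x)"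
proof -
  note cpt = assms(1)
  note s1 = assms(11) and s2 = assms(12)
  show ?thesis
  proof (cases "\<Omega> = {}")
    case True
    then show ?thesis by simp
  next
    case nonempty: False
  obtain R1 where R1: "R1 \<ge> 0" "\<forall>s\<in>{0..r}. \<forall>y\<in>\<Omega>. \<bar>\<tau>1 s y\<bar> \<le> R1"
    using cont_into_bdd[OF cpt sol_D(2)[OF s1], of 0 r] by auto
  obtain R2 where R2: "R2 \<ge> 0" "\<forall>s\<in>{0..r}. \<forall>y\<in>\<Omega>. \<bar>\<tau>2 s y\<bar> \<le> R2"
    using cont_into_bdd[OF cpt sol_D(2)[OF s2], of 0 r] by auto
  define R where "R = max R1 R2"
  have R0: "R \<ge> 0" unfolding R_def using R1 by simp
  have Rb: "\<forall>l\<in>{0..r}. \<forall>z\<in>\<Omega>. \<tau>1 l z \<le> R \<and> \<tau>2 l z \<le> R"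
  proof (intro ballI)
    fix l z assume l: "l \<in> {0..r}" and z: "z \<in> \<Omega>"
    have "\<bar>\<tau>1 l z\<bar> \<le> R1" "\<bar>\<tau>2 l z\<bar> \<le> R2" using R1(2) R2(2) l z by blast+
    then show "\<tau>1 l z \<le> R \<and> \<tau>2 l z \<le> R" unfolding R_def by (simp add: le_max_iff_disj abs_le_iff)
  qed
  obtain M1 where M1: "M1 \<ge> 0" "\<forall>s\<in>{-R..r}. \<forall>y\<in>\<Omega>. \<bar>A1 s y\<bar> \<le> M1"
    using cont_into_bdd[OF cpt sol_D(1)[OF s1], of "-R" r] by auto
  obtain M2 where M2: "M2 \<ge> 0" "\<forall>s\<in>{-R..r}. \<forall>y\<in>\<Omega>. \<bar>A2 s y\<bar> \<le> M2"
    using cont_into_bdd[OF cpt sol_D(1)[OF s2], of "-R" r] by auto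
  define M where "M = max 1 (max (max M1 M2) R)"
  have M0: "M > 0" unfolding M_def by simp
  have RM: "R \<le> M" unfolding M_def by simp
  have MA: "\<forall>s\<in>{-R..r}. \<forall>y\<in>\<Omega>. \<bar>A1 s y\<bar> \<le> M \<and> \<bar>A2 s y\<bar> \<le> M"
  proof (intro ballI)
    fix s y assume s: "s \<in> {-R..r}" and y: "y \<in> \<Omega>"
    have "\<bar>A1 s y\<bar> \<le> M1" "\<bar>A2 s y\<bar> \<le> M2" using M1(2) M2(2) s y by blast+
    then show "\<bar>A1 s y\<bar> \<le> M \<and> \<bar>A2 s y\<bar> \<le> M" unfolding M_def by (simp add: le_max_iff_disj)
  qed
  obtain LF where LF: "LF \<ge> 0" "Flip \<Omega> F M LF"
    using F_lip_pt[OF cpt assms(3) M0] by blast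
  obtain Lf where Lf: "Lf \<ge> 0" "flip \<Omega> f Lf"
    using f_lip_pt[OF cpt assms(4)] by blast
  have constCF: "(\<lambda>_. M) \<in> CF \<Omega>" unfolding CF_def by simp
  have fcM: "continuous_on \<Omega> (f (\<lambda>_. M))" by (rule standing_f_cont[OF assms(4) constCF])
  obtain z0 where z0: "z0 \<in> \<Omega>" "\<forall>y\<in>\<Omega>. f (\<lambda>_. M) z0 \<le> f (\<lambda>_. M) y"
    using continuous_attains_inf[OF cpt nonempty fcM] by blast
  define m where "m = f (\<lambda>_. M) z0"
  have m0: "m > 0" unfolding m_def by (rule standing_f_pos[OF assms(4) constCF z0(1)])
  have mb1: "\<forall>s\<in>{-R..r}. m \<le> f (A1 s) z" and mb2: "\<forall>s\<in>{-R..r}. m \<le> f (A2 s) z"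
    if z: "z \<in> \<Omega>" for z
  proof -
    have "m \<le> f (\<lambda>_. M) z" using z0(2) z unfolding m_def by blast
    moreover have "f (\<lambda>_. M) z \<le> f (A1 s) z" if s: "s \<in> {-R..r}" for s
    proof (rule standing_f_mono[OF assms(4) _ constCF _ z])
      show "A1 s \<in> CF \<Omega>" using cont_into_D[OF sol_D(1)[OF s1]] s unfolding CF_def by auto
      show "\<forall>x\<in>\<Omega>. A1 s x \<le> M" using MA s by (auto simp: abs_le_iff)
    qed
    moreover have "f (\<lambda>_. M) z \<le> f (A2 s) z" if s: "s \<in> {-R..r}" for s
    proof (rule standing_f_mono[OF assms(4) _ constCF _ z])
      show "A2 s \<in> CF \<Omega>" using cont_into_D[OF sol_D(1)[OF s2]] s unfolding CF_def by auto
      show "\<forall>x\<in>\<Omega>. A2 s x \<le> M" using MA s by (auto simp: abs_le_iff)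
    qed
    ultimately show "\<forall>s\<in>{-R..r}. m \<le> f (A1 s) z" "\<forall>s\<in>{-R..r}. m \<le> f (A2 s) z"
      by (meson order_trans)+
  qed
  obtain LipA where LipA: "LipA \<ge> 0"
    "\<forall>s\<in>{-R..r}. \<forall>s'\<in>{-R..r}. \<forall>y\<in>\<Omega>. \<bar>A1 s y - A1 s' y\<bar> \<le> LipA * \<bar>s - s'\<bar>"
    using A_lip[OF cpt assms(2) assms(3) assms(6) s1 R0] by blast
  define C where "C = R * Lf / m"
  have C0: "C \<ge> 0" unfolding C_def using R0 Lf(1) m0 by simp
  have Ct: "\<forall>l\<in>{0..r}. \<forall>E\<ge>0. (\<forall>s\<in>{-R..l}. \<forall>y\<in>\<Omega>. \<bar>A1 s y - A2 s y\<bar> \<le> E) \<longrightarrow>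
                 (\<forall>z\<in>\<Omega>. \<bar>\<tau>1 l z - \<tau>2 l z\<bar> \<le> C * E)"
  proof (intro ballI allI impI)
    fix l E z assume l: "l \<in> {0..r}" and E0: "0 \<le> E"
      and Eb: "\<forall>s\<in>{-R..l}. \<forall>y\<in>\<Omega>. \<bar>A1 s y - A2 s y\<bar> \<le> E" and z: "z \<in> \<Omega>"
    have T: "\<tau>1 l z \<le> R" "\<tau>2 l z \<le> R" using Rb l z by blast+
    have "\<bar>\<tau>1 l z - \<tau>2 l z\<bar> \<le> R * Lf * E / m"
      by (rule tau_diff[OF cpt Lf(2) Lf(1) s1 s2 l z T m0 mb1[OF z] mb2[OF z] E0 Eb])
    then show "\<bar>\<tau>1 l z - \<tau>2 l z\<bar> \<le> C * E" unfolding C_def by simp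
  qed
  define K where "K = LF * (2 + C + LipA * C)"
  have K0: "K \<ge> 0" unfolding K_def using LF(1) C0 LipA(1) by simp
  have Gd: "\<forall>l\<in>{0..r}. \<forall>E\<ge>0. (\<forall>s\<in>{-R..l}. \<forall>y\<in>\<Omega>. \<bar>A1 s y - A2 s y\<bar> \<le> E) \<longrightarrow>
       (\<forall>x\<in>\<Omega>. \<bar>F (A1 l) (\<tau>1 l) (\<lambda>(z, y). A1 (l - \<tau>1 l z) y) x
                - F (A2 l) (\<tau>2 l) (\<lambda>(z, y). A2 (l - \<tau>2 l z) y) x\<bar> \<le> K * E)"
  proof (intro ballI allI impI)
    fix l E x assume l: "l \<in> {0..r}" and E0: "0 \<le> E"
      and Eb: "\<forall>s\<in>{-R..l}. \<forall>y\<in>\<Omega>. \<bar>A1 s y - A2 s y\<bar> \<le> E" and x: "x \<in> \<Omega>"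
    show "\<bar>F (A1 l) (\<tau>1 l) (\<lambda>(z, y). A1 (l - \<tau>1 l z) y) x
                - F (A2 l) (\<tau>2 l) (\<lambda>(z, y). A2 (l - \<tau>2 l z) y) x\<bar> \<le> K * E"
      unfolding K_def
      by (rule G_diff[OF cpt LF(2) LF(1) s1 s2 R0 Rb MA RM LipA C0 Ct l E0 Eb x])
  qed
  define \<delta> where "\<delta> = 1 / (2 * (K + 1))"
  have d0: "\<delta> > 0" unfolding \<delta>_def using K0 by simp
  have dK: "K * \<delta> \<le> 1/2" unfolding \<delta>_def using K0 by (simp add: field_simps)
  have ind: "\<forall>t\<le>min (real n * \<delta>) r. \<forall>x\<in>\<Omega>. A1 t x = A2 t x" for n :: nat
  proof (induction n)
    case 0
    show ?case using sol_D(4)[OF s1] sol_D(4)[OF s2] assms(10) by auto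
  next
    case (Suc n)
    define a where "a = min (real n * \<delta>) r"
    have a: "0 \<le> a" "a \<le> r" unfolding a_def using d0 assms(10) by auto
    have "\<forall>t\<le>min (a + \<delta>) r. \<forall>x\<in>\<Omega>. A1 t x = A2 t x"
      by (rule step_lemma[OF cpt s1 s2 Gd K0 R0 MA d0 dK a]) (use Suc.IH in \<open>simp add: a_def\<close>)
    moreover have "min (real (Suc n) * \<delta>) r \<le> min (a + \<delta>) r"
      unfolding a_def using d0 by (auto simp: algebra_simps min_def)
    ultimately show ?case by force
  qed
  have Aeq: "\<forall>t\<le>r. \<forall>x\<in>\<Omega>. A1 t x = A2 t x"
  proof (intro allI impI ballI)
    fix t x assume t: "t \<le> r" and x: "x \<in> \<Omega>"
    obtain n :: nat where n: "t / \<delta> \<le> real n" using real_arch_simple by blast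
    then have "t \<le> real n * \<delta>" using d0 by (simp add: divide_le_eq)
    then have "t \<le> min (real n * \<delta>) r" using t by simp
    then show "A1 t x = A2 t x" using ind x by blast
  qed
  have teq: "\<forall>t\<in>{0..r}. \<forall>x\<in>\<Omega>. \<tau>1 t x = \<tau>2 t x"
  proof (intro ballI)
    fix t x assume t: "t \<in> {0..r}" and x: "x \<in> \<Omega>"
    have "\<forall>s\<in>{-R..t}. \<forall>y\<in>\<Omega>. \<bar>A1 s y - A2 s y\<bar> \<le> 0" using Aeq t by auto
    then have "\<bar>\<tau>1 t x - \<tau>2 t x\<bar> \<le> C * 0" using Ct t x by blast
    then show "\<tau>1 t x = \<tau>2 t x" by simp
  qed
  show ?thesis using Aeq teq by blast
  qed
qed

end
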